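(* Let $(A,\mathcal H)$ be a left bialgebroid. For every right $\mathcal H$-comodule $A^o$-subring $B$ of $\mathcal H$ via $t$, the set $\mathcal HB^+$ is a left ideal two-sided coideal of $\mathcal H$, and the assignment $B\mapsto\mathcal HB^+$ is inclusion-preserving.
   Context: $\Bbbk$ is a field. A left bialgebroid $(A,\mathcal H)$: $\Bbbk$-algebras $A,\mathcal H$, algebra maps $s:A\to\mathcal H$, $t:A^o\to\mathcal H$ with commuting images, $A$-bilinear $\Delta:\mathcal H\to\mathcal H\otimes_A\mathcal H$, $\varepsilon:\mathcal H\to A$ (bimodule structure $a\cdot h\cdot b=s(a)t(b)h$; $\mathcal H\otimes_A\mathcal H$ = quotient of $\mathcal H\otimes\mathcal H$ by span of $t(a)x\otimes y-x\otimes s(a)y$), with $(\mathcal H,\Delta,\varepsilon)$ a coassociative counital $A$-coring, $\Delta$ an algebra map into the Takeuchi product $\{\sum x_i\otimes_Ay_i:\sum x_it(a)\otimes_Ay_i=\sum x_i\otimes_Ay_is(a)\ \forall a\}$, $\varepsilon(xs(\varepsilon(y)))=\varepsilon(xy)=\varepsilon(xt(\varepsilon(y)))$, $\varepsilon(1)=1$. $\mathcal H^+=\ker\varepsilon$, $B^+=B\cap\mathcal H^+$. Right $\mathcal H$-comodule $A^o$-subring via $t$: subalgebra $B\supseteq t(A)$ with a coassociative counital right $A$-linear coaction $\delta:B\to B\otimes_A\mathcal H$ ($b\cdot a=t(a)b$; $\mathcal H$ left via $s$) such that $(\iota\otimes_A\mathcal H)\delta=\Delta\iota$, $\iota$ the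 inclusion. Left ideal two-sided coideal: left ideal $I$ with $\varepsilon(I)=0$ and $\Delta(I)\subseteq$ image of $I\otimes_A\mathcal H+\mathcal H\otimes_AI$ in $\mathcal H\otimes_A\mathcal H$. *)

theory Defs
  imports "HOL-Library.Poly_Mapping"
begin

text \<open>
  A k-algebra is modelled as a type of class ring_1 together with a ring homomorphism
  from the field k into its centre (the structure map c to c 1).
  Elements of balanced tensor products M (x)_A N are modelled by formal Z-linear
  combinations of pairs (finitely supported maps pairs to int, i.e. frag) modulo the
  additive subgroup generated by the bi-additivity and A-balancing relations.  Because the
  A-actions restrict to the k-actions, this is canonically the same as the paper's quotient
  of M (x)_k N.  A map into a tensor product is given by choosing representatives.
\<close>

definition k_algebra :: "('k::field \<Rightarrow> 'r::ring_1) \<Rightarrow> bool" where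
  "k_algebra e \<longleftrightarrow> e 1 = 1 \<and> (\<forall>c d. e (c + d) = e c + e d) \<and> (\<forall>c d. e (c * d) = e c * e d)
     \<and> (\<forall>c x. e c * x = x * e c)"

definition alg_map :: "('k::field \<Rightarrow> 'a::ring_1) \<Rightarrow> ('k \<Rightarrow> 'h::ring_1) \<Rightarrow> ('a \<Rightarrow> 'h) \<Rightarrow> bool" where
  "alg_map eA eH f \<longleftrightarrow> f 1 = 1 \<and> (\<forall>x y. f (x + y) = f x + f y) \<and> (\<forall>x y. f (x * y) = f x * f y)
     \<and> (\<forall>c. f (eA c) = eH c)"

definition alg_map_op :: "('k::field \<Rightarrow> 'a::ring_1) \<Rightarrow> ('k \<Rightarrow> 'h::ring_1) \<Rightarrow> ('a \<Rightarrow> 'h) \<Rightarrow> bool" where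
  "alg_map_op eA eH f \<longleftrightarrow> f 1 = 1 \<and> (\<forall>x y. f (x + y) = f x + f y) \<and> (\<forall>x y. f (x * y) = f y * f x)
     \<and> (\<forall>c. f (eA c) = eH c)"

inductive_set addgen :: "'g::ab_group_add set \<Rightarrow> 'g set" for R where
  zero: "0 \<in> addgen R"
| gen: "r \<in> R \<Longrightarrow> r \<in> addgen R"
| diff: "u \<in> addgen R \<Longrightarrow> v \<in> addgen R \<Longrightarrow> u - v \<in> addgen R"

text \<open>Relations of M (x)_A N for subsets M, N of H; M is a right A-module via
  m.a = t(a) m and N a left A-module via a.n = s(a) n.\<close>
definition tens2_rels :: "('a \<Rightarrow> 'h::ring_1) \<Rightarrow> ('a \<Rightarrow> 'h) \<Rightarrow> 'h set \<Rightarrow> 'h set \<Rightarrow> ('h \<times> 'h \<Rightarrow>\<^sub>0 int) set" where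
  "tens2_rels s t M N =
     {frag_of (x + x', y) - frag_of (x, y) - frag_of (x', y) | x x' y. x \<in> M \<and> x' \<in> M \<and> y \<in> N}
   \<union> {frag_of (x, y + y') - frag_of (x, y) - frag_of (x, y') | x y y'. x \<in> M \<and> y \<in> N \<and> y' \<in> N}
   \<union> {frag_of (t a * x, y) - frag_of (x, s a * y) | a x y. x \<in> M \<and> y \<in> N}"

definition tens2_eq :: "('a \<Rightarrow> 'h::ring_1) \<Rightarrow> ('a \<Rightarrow> 'h) \<Rightarrow> 'h set \<Rightarrow> 'h set
     \<Rightarrow> ('h \<times> 'h \<Rightarrow>\<^sub>0 int) \<Rightarrow> ('h \<times> 'h \<Rightarrow>\<^sub>0 int) \<Rightarrow> bool" where
  "tens2_eq s t M N u v \<longleftrightarrow> Poly_Mapping.keys u \<subseteq> M \<times> N \<and> Poly_Mapping.keys v \<subseteq> M \<times> N \<and> u - v \<in> addgen (tens2_rels s t M N)"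

text \<open>Relations of the iterated tensor product M (x)_A H (x)_A H (middle factor an
  A-bimodule: left via s, right via t).\<close>
definition tens3_rels :: "('a \<Rightarrow> 'h::ring_1) \<Rightarrow> ('a \<Rightarrow> 'h) \<Rightarrow> 'h set \<Rightarrow> ('h \<times> 'h \<times> 'h \<Rightarrow>\<^sub>0 int) set" where
  "tens3_rels s t M =
     {frag_of (x + x', y, z) - frag_of (x, y, z) - frag_of (x', y, z) | x x' y z. x \<in> M \<and> x' \<in> M}
   \<union> {frag_of (x, y + y', z) - frag_of (x, y, z) - frag_of (x, y', z) | x y y' z. x \<in> M}
   \<union> {frag_of (x, y, z + z') - frag_of (x, y, z) - frag_of (x, y, z') | x y z z'. x \<in> M}
   \<union> {frag_of (t a * x, y, z) - frag_of (x, s a * y, z) | a x y z. x \<in> M}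
   \<union> {frag_of (x, t a * y, z) - frag_of (x, y, s a * z) | a x y z. x \<in> M}"

definition tens3_eq :: "('a \<Rightarrow> 'h::ring_1) \<Rightarrow> ('a \<Rightarrow> 'h) \<Rightarrow> 'h set
     \<Rightarrow> ('h \<times> 'h \<times> 'h \<Rightarrow>\<^sub>0 int) \<Rightarrow> ('h \<times> 'h \<times> 'h \<Rightarrow>\<^sub>0 int) \<Rightarrow> bool" where
  "tens3_eq s t M u v \<longleftrightarrow> Poly_Mapping.keys u \<subseteq> M \<times> UNIV \<times> UNIV \<and> Poly_Mapping.keys v \<subseteq> M \<times> UNIV \<times> UNIV
     \<and> u - v \<in> addgen (tens3_rels s t M)"

definition fsum :: "('b \<Rightarrow> 'h::ring_1) \<Rightarrow> ('b \<Rightarrow>\<^sub>0 int) \<Rightarrow> 'h" where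
  "fsum f u = (\<Sum>i\<in>Poly_Mapping.keys u. of_int (Poly_Mapping.lookup u i) * f i)"

text \<open>Maps (f (x) H) and (H (x) f) on representatives, and the product of representatives.\<close>
definition ext_left :: "('h \<Rightarrow> ('h \<times> 'h \<Rightarrow>\<^sub>0 int)) \<Rightarrow> ('h \<times> 'h \<Rightarrow>\<^sub>0 int) \<Rightarrow> ('h \<times> 'h \<times> 'h \<Rightarrow>\<^sub>0 int)" where
  "ext_left f u = frag_extend (\<lambda>(x, y). frag_extend (\<lambda>(p, q). frag_of (p, q, y)) (f x)) u"

definition ext_right :: "('h \<Rightarrow> ('h \<times> 'h \<Rightarrow>\<^sub>0 int)) \<Rightarrow> ('h \<times> 'h \<Rightarrow>\<^sub>0 int) \<Rightarrow> ('h \<times> 'h \<times> 'h \<Rightarrow>\<^sub>0 int)" where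
  "ext_right f u = frag_extend (\<lambda>(x, y). frag_extend (\<lambda>(p, q). frag_of (x, p, q)) (f y)) u"

definition tmap :: "('h \<times> 'h \<Rightarrow> 'h \<times> 'h) \<Rightarrow> ('h \<times> 'h \<Rightarrow>\<^sub>0 int) \<Rightarrow> ('h \<times> 'h \<Rightarrow>\<^sub>0 int)" where
  "tmap g u = frag_extend (\<lambda>z. frag_of (g z)) u"

definition tmult :: "('h::ring_1 \<times> 'h \<Rightarrow>\<^sub>0 int) \<Rightarrow> ('h \<times> 'h \<Rightarrow>\<^sub>0 int) \<Rightarrow> ('h \<times> 'h \<Rightarrow>\<^sub>0 int)" where
  "tmult u v = frag_extend (\<lambda>(x, y). frag_extend (\<lambda>(x', y'). frag_of (x * x', y * y')) v) u"

definition left_bialgebroid ::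
  "('k::field \<Rightarrow> 'a::ring_1) \<Rightarrow> ('k \<Rightarrow> 'h::ring_1) \<Rightarrow> ('a \<Rightarrow> 'h) \<Rightarrow> ('a \<Rightarrow> 'h)
   \<Rightarrow> ('h \<Rightarrow> ('h \<times> 'h \<Rightarrow>\<^sub>0 int)) \<Rightarrow> ('h \<Rightarrow> 'a) \<Rightarrow> bool" where
  "left_bialgebroid eA eH s t \<Delta> \<epsilon> \<longleftrightarrow>
     k_algebra eA \<and> k_algebra eH \<and> alg_map eA eH s \<and> alg_map_op eA eH t
   \<and> (\<forall>a b. s a * t b = t b * s a)
   \<comment> \<open>Delta is A-bilinear (additive and compatible with the A-bimodule structures)\<close>
   \<and> (\<forall>x y. tens2_eq s t UNIV UNIV (\<Delta> (x + y)) (\<Delta> x + \<Delta> y))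
   \<and> (\<forall>a b h. tens2_eq s t UNIV UNIV (\<Delta> (s a * t b * h))
                 (tmap (\<lambda>(x, y). (s a * x, t b * y)) (\<Delta> h)))
   \<comment> \<open>epsilon is A-bilinear\<close>
   \<and> (\<forall>x y. \<epsilon> (x + y) = \<epsilon> x + \<epsilon> y)
   \<and> (\<forall>a b h. \<epsilon> (s a * t b * h) = a * \<epsilon> h * b)
   \<comment> \<open>coassociativity and counitality\<close>
   \<and> (\<forall>h. tens3_eq s t UNIV (ext_left \<Delta> (\<Delta> h)) (ext_right \<Delta> (\<Delta> h)))
   \<and> (\<forall>h. fsum (\<lambda>(x, y). s (\<epsilon> x) * y) (\<Delta> h) = h)
   \<and> (\<forall>h. fsum (\<lambda>(x, y). t (\<epsilon> y) * x) (\<Delta> h) = h)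
   \<comment> \<open>Delta lands in the Takeuchi product and is an algebra map into it\<close>
   \<and> (\<forall>h a. tens2_eq s t UNIV UNIV (tmap (\<lambda>(x, y). (x * t a, y)) (\<Delta> h))
                                    (tmap (\<lambda>(x, y). (x, y * s a)) (\<Delta> h)))
   \<and> (\<forall>x y. tens2_eq s t UNIV UNIV (\<Delta> (x * y)) (tmult (\<Delta> x) (\<Delta> y)))
   \<and> tens2_eq s t UNIV UNIV (\<Delta> 1) (frag_of (1, 1))
   \<comment> \<open>counit axioms\<close>
   \<and> (\<forall>x y. \<epsilon> (x * s (\<epsilon> y)) = \<epsilon> (x * y) \<and> \<epsilon> (x * y) = \<epsilon> (x * t (\<epsilon> y)))
   \<and> \<epsilon> 1 = 1"

definition k_subalgebra :: "('k \<Rightarrow> 'h::ring_1) \<Rightarrow> 'h set \<Rightarrow> bool" where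
  "k_subalgebra eH B \<longleftrightarrow> 0 \<in> B \<and> 1 \<in> B \<and> (\<forall>x\<in>B. \<forall>y\<in>B. x + y \<in> B \<and> x - y \<in> B \<and> x * y \<in> B)
     \<and> (\<forall>c. \<forall>x\<in>B. eH c * x \<in> B)"

text \<open>Right H-comodule A^o-subring of H via t.  B is a right A-module by b.a = t(a) b;
  the coaction delta : B to B (x)_A H is given by representatives supported on B x H.\<close>
definition right_comodule_subring ::
  "('k::field \<Rightarrow> 'h::ring_1) \<Rightarrow> ('a \<Rightarrow> 'h) \<Rightarrow> ('a \<Rightarrow> 'h)
   \<Rightarrow> ('h \<Rightarrow> ('h \<times> 'h \<Rightarrow>\<^sub>0 int)) \<Rightarrow> ('h \<Rightarrow> 'a) \<Rightarrow> 'h set \<Rightarrow> bool" where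
  "right_comodule_subring eH s t \<Delta> \<epsilon> B \<longleftrightarrow>
     k_subalgebra eH B \<and> range t \<subseteq> B \<and>
     (\<exists>\<delta>. (\<forall>b\<in>B. Poly_Mapping.keys (\<delta> b) \<subseteq> B \<times> UNIV)
        \<comment> \<open>right A-linearity\<close>
        \<and> (\<forall>b\<in>B. \<forall>b'\<in>B. tens2_eq s t B UNIV (\<delta> (b + b')) (\<delta> b + \<delta> b'))
        \<and> (\<forall>a. \<forall>b\<in>B. tens2_eq s t B UNIV (\<delta> (t a * b)) (tmap (\<lambda>(x, y). (x, t a * y)) (\<delta> b)))
        \<comment> \<open>coassociativity in B (x)_A H (x)_A H and counitality\<close>
        \<and> (\<forall>b\<in>B. tens3_eq s t B (ext_left \<delta> (\<delta> b)) (ext_right \<Delta> (\<delta> b)))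
        \<and> (\<forall>b\<in>B. fsum (\<lambda>(x, y). t (\<epsilon> y) * x) (\<delta> b) = b)
        \<comment> \<open>(iota (x) H) delta = Delta iota\<close>
        \<and> (\<forall>b\<in>B. tens2_eq s t UNIV UNIV (\<delta> b) (\<Delta> b)))"

definition left_ideal :: "'h::ring_1 set \<Rightarrow> bool" where
  "left_ideal I \<longleftrightarrow> 0 \<in> I \<and> (\<forall>x\<in>I. \<forall>y\<in>I. x + y \<in> I \<and> x - y \<in> I) \<and> (\<forall>h. \<forall>x\<in>I. h * x \<in> I)"

definition left_ideal_two_sided_coideal ::
  "('a \<Rightarrow> 'h::ring_1) \<Rightarrow> ('a \<Rightarrow> 'h) \<Rightarrow> ('h \<Rightarrow> ('h \<times> 'h \<Rightarrow>\<^sub>0 int)) \<Rightarrow> ('h \<Rightarrow> 'a::ring_1) \<Rightarrow> 'h set \<Rightarrow> bool" where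
  "left_ideal_two_sided_coideal s t \<Delta> \<epsilon> I \<longleftrightarrow>
     left_ideal I \<and> (\<forall>x\<in>I. \<epsilon> x = 0) \<and>
     (\<forall>x\<in>I. \<exists>v. Poly_Mapping.keys v \<subseteq> (I \<times> UNIV) \<union> (UNIV \<times> I) \<and> tens2_eq s t UNIV UNIV (\<Delta> x) v)"

text \<open>B^+ = B \<inter> ker epsilon, and H B^+ = set of finite sums of products h b with b in B^+.\<close>
definition plus_part :: "('h \<Rightarrow> 'a::zero) \<Rightarrow> 'h set \<Rightarrow> 'h set" where
  "plus_part \<epsilon> B = {b \<in> B. \<epsilon> b = 0}"

definition left_gen :: "'h::ring_1 set \<Rightarrow> 'h set" where
  "left_gen X = {x. \<exists>n h b. (\<forall>i<n. b i \<in> X) \<and> x = (\<Sum>i<(n::nat). h i * b i)}"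

end

theory Submission
  imports Defs
begin

lemma addgen_add: "u \<in> addgen R \<Longrightarrow> v \<in> addgen R \<Longrightarrow> u + v \<in> addgen R"
proof -
  assume u: "u \<in> addgen R" and v: "v \<in> addgen R"
  have "0 - v \<in> addgen R" by (rule addgen.diff[OF addgen.zero v])
  then have "u - (0 - v) \<in> addgen R" by (rule addgen.diff[OF u])
  then show ?thesis by simp
qed

lemma addgen_uminus: "u \<in> addgen R \<Longrightarrow> - u \<in> addgen R"
  using addgen.diff[OF addgen.zero, of u R] by simp

lemma addgen_sum: fixes n :: nat shows "(\<And>i. i < n \<Longrightarrow> f i \<in> addgen R) \<Longrightarrow> (\<Sum>i<n. f i) \<in> addgen R"
  by (induction n) (auto intro: addgen_add addgen.zero)

lemma addgen_hom:
  assumes lin: "\<And>a b. \<phi> (a - b) = \<phi> a - \<phi> b"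
    and gens: "\<And>r. r \<in> R \<Longrightarrow> \<phi> r \<in> addgen R'"
    and u: "u \<in> addgen R"
  shows "\<phi> u \<in> addgen R'"
  using u
proof induction
  case zero
  have "\<phi> 0 = 0" using lin[of 0 0] by simp
  then show ?case by (simp add: addgen.zero)
next
  case (gen r) then show ?case by (rule gens)
next
  case (diff u v) then show ?case by (simp add: lin addgen.diff)
qed

lemma frag_extend_fun_diff: "frag_extend (\<lambda>z. f z - g z) u = frag_extend f u - frag_extend g u"
  using subset_UNIV
  by (induction u rule: frag_induction) (auto simp: frag_extend_diff algebra_simps)

lemma frag_extend_addgen: "(\<And>z. f z \<in> addgen R) \<Longrightarrow> frag_extend f u \<in> addgen R"
  using subset_UNIV
  by (induction u rule: frag_induction) (auto simp: frag_extend_diff intro: addgen.zero addgen.diff)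

lemma fsum_superset:
  assumes "finite S" "Poly_Mapping.keys u \<subseteq> S"
  shows "fsum f u = (\<Sum>i\<in>S. of_int (Poly_Mapping.lookup u i) * f i)"
  unfolding fsum_def by (rule sum.mono_neutral_left) (use assms in \<open>auto simp: in_keys_iff\<close>)

lemma fsum_diff: "fsum f (a - b) = fsum f a - fsum f b"
proof -
  let ?S = "Poly_Mapping.keys a \<union> Poly_Mapping.keys b"
  have "fsum f (a - b) = (\<Sum>i\<in>?S. of_int (Poly_Mapping.lookup (a - b) i) * f i)"
    by (rule fsum_superset) (auto simp: keys_diff)
  also have "\<dots> = (\<Sum>i\<in>?S. of_int (Poly_Mapping.lookup a i) * f i - of_int (Poly_Mapping.lookup b i) * f i)"
    by (simp add: lookup_minus left_diff_distrib)
  also have "\<dots> = fsum f a - fsum f b"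
    by (simp add: sum_subtractf fsum_superset[of ?S a] fsum_superset[of ?S b])
  finally show ?thesis .
qed

lemma fsum_zero: "fsum f 0 = 0"
  by (simp add: fsum_def)

lemma fsum_of: "fsum f (frag_of x) = f x"
  by (simp add: fsum_def)

lemma rel_add1: "x \<in> M \<Longrightarrow> x' \<in> M \<Longrightarrow> y \<in> N \<Longrightarrow>
   frag_of (x + x', y) - frag_of (x, y) - frag_of (x', y) \<in> addgen (tens2_rels s t M N)"
  by (rule addgen.gen) (unfold tens2_rels_def, blast)

lemma rel_add2: "x \<in> M \<Longrightarrow> y \<in> N \<Longrightarrow> y' \<in> N \<Longrightarrow>
   frag_of (x, y + y') - frag_of (x, y) - frag_of (x, y') \<in> addgen (tens2_rels s t M N)"
  by (rule addgen.gen) (unfold tens2_rels_def, blast)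

lemma rel_bal: "x \<in> M \<Longrightarrow> y \<in> N \<Longrightarrow>
   frag_of (t a * x, y) - frag_of (x, s a * y) \<in> addgen (tens2_rels s t M N)"
  by (rule addgen.gen) (unfold tens2_rels_def, blast)

lemma tmult_diff_right: "tmult w (a - b) = tmult w a - tmult w b"
  unfolding tmult_def by (simp add: frag_extend_diff case_prod_unfold frag_extend_fun_diff)

lemma tmult_diff_left: "tmult (a - b) v = tmult a v - tmult b v"
  unfolding tmult_def by (rule frag_extend_diff)

lemma tmult_expand: "tmult w v = frag_extend (\<lambda>z. tmult (frag_of z) v) w"
  unfolding tmult_def by simp

lemma tmult_of_of: "tmult (frag_of (p, q)) (frag_of (x, y)) = frag_of (p * x, q * y)"
  unfolding tmult_def by simp

lemma tmult_tmap: "tmult (tmap f w) v = frag_extend (\<lambda>z. tmult (frag_of (f z)) v) w"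
proof -
  have "tmult (tmap f w) v = frag_extend (\<lambda>z. tmult (frag_of z) v) (frag_extend (frag_of o f) w)"
    unfolding tmap_def by (subst tmult_expand) (simp add: comp_def)
  also have "\<dots> = frag_extend ((\<lambda>z. tmult (frag_of z) v) o f) w"
    by (rule frag_extend_compose)
  finally show ?thesis by (simp add: comp_def)
qed

lemma keys_tmult:
  "Poly_Mapping.keys (tmult w v) \<subseteq> {(fst z * fst z', snd z * snd z') | z z'. z \<in> Poly_Mapping.keys w \<and> z' \<in> Poly_Mapping.keys v}"
proof
  fix k assume "k \<in> Poly_Mapping.keys (tmult w v)"
  then obtain z where z: "z \<in> Poly_Mapping.keys w"
    and k1: "k \<in> Poly_Mapping.keys (tmult (frag_of z) v)"
    using keys_frag_extend[of "\<lambda>z. tmult (frag_of z) v" w] by (subst (asm) tmult_expand) blast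
  have "tmult (frag_of z) v = frag_extend (\<lambda>z'. frag_of (fst z * fst z', snd z * snd z')) v"
    unfolding tmult_def by (simp add: case_prod_unfold)
  with k1 obtain z' where "z' \<in> Poly_Mapping.keys v" "k = (fst z * fst z', snd z * snd z')"
    using keys_frag_extend[of "\<lambda>z'. frag_of (fst z * fst z', snd z * snd z')" v] by auto
  with z show "k \<in> {(fst z * fst z', snd z * snd z') | z z'. z \<in> Poly_Mapping.keys w \<and> z' \<in> Poly_Mapping.keys v}"
    by blast
qed

lemma rmult_addgen:
  assumes "w \<in> addgen (tens2_rels s t UNIV UNIV)"
  shows "tmult w (frag_of (p, q)) \<in> addgen (tens2_rels s t UNIV UNIV)"
proof (rule addgen_hom[of "\<lambda>w. tmult w (frag_of (p, q))", OF tmult_diff_left _ assms])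
  fix r assume r: "r \<in> tens2_rels s t UNIV UNIV"
  from r[unfolded tens2_rels_def] show "tmult r (frag_of (p, q)) \<in> addgen (tens2_rels s t UNIV UNIV)"
    by (auto simp: tmult_diff_left tmult_of_of distrib_right distrib_left mult.assoc
             intro!: rel_add1 rel_add2 rel_bal)
qed
lemma tmult_left_addgen:
  assumes tak: "\<And>a. tmap (\<lambda>(x, y). (x * t a, y)) w - tmap (\<lambda>(x, y). (x, y * s a)) w
                  \<in> addgen (tens2_rels s t UNIV UNIV)"
    and u: "u \<in> addgen (tens2_rels s t UNIV UNIV)"
  shows "tmult w u \<in> addgen (tens2_rels s t UNIV UNIV)"
proof (rule addgen_hom[of "tmult w", OF tmult_diff_right _ u])
  fix r assume r: "r \<in> tens2_rels s t UNIV UNIV"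
  from r[unfolded tens2_rels_def] show "tmult w r \<in> addgen (tens2_rels s t UNIV UNIV)"
  proof (elim UnE CollectE exE conjE)
    fix x x' y assume r: "r = frag_of (x + x', y) - frag_of (x, y) - frag_of (x', y)"
    show ?thesis unfolding r
      by (subst tmult_expand, rule frag_extend_addgen)
         (auto simp: tmult_diff_right tmult_of_of distrib_left intro!: rel_add1)
  next
    fix x y y' assume r: "r = frag_of (x, y + y') - frag_of (x, y) - frag_of (x, y')"
    show ?thesis unfolding r
      by (subst tmult_expand, rule frag_extend_addgen)
         (auto simp: tmult_diff_right tmult_of_of distrib_left intro!: rel_add2)
  next
    fix a x y assume r: "r = frag_of (t a * x, y) - frag_of (x, s a * y)"
    have "tmult w r = frag_extend (\<lambda>z. tmult (frag_of ((\<lambda>(p, q). (p * t a, q)) z)) (frag_of (x, y))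
                           - tmult (frag_of ((\<lambda>(p, q). (p, q * s a)) z)) (frag_of (x, y))) w"
      unfolding r
      by (subst tmult_expand, rule frag_extend_eq)
         (auto simp: tmult_diff_right tmult_of_of mult.assoc case_prod_unfold)
    also have "\<dots> = tmult (tmap (\<lambda>(x, y). (x * t a, y)) w - tmap (\<lambda>(x, y). (x, y * s a)) w) (frag_of (x, y))"
      by (simp only: frag_extend_fun_diff tmult_diff_left tmult_tmap)
    finally show ?thesis using rmult_addgen[OF tak] by simp
  qed
qed

lemma Delta_sum:
  fixes n :: nat
  assumes Dadd: "\<And>x y. \<Delta> (x + y) - (\<Delta> x + \<Delta> y) \<in> addgen R"
    and each: "\<And>i. i < n \<Longrightarrow> \<Delta> (y i) - W i \<in> addgen R"
  shows "\<Delta> (\<Sum>i<n. y i) - (\<Sum>i<n. W i) \<in> addgen R"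
  using each
proof (induction n)
  case 0
  have "- \<Delta> 0 \<in> addgen R" using Dadd[of 0 0] by simp
  then show ?case using addgen_uminus by fastforce
next
  case (Suc n)
  have "\<Delta> (\<Sum>i<Suc n. y i) - (\<Sum>i<Suc n. W i) =
     (\<Delta> ((\<Sum>i<n. y i) + y n) - (\<Delta> (\<Sum>i<n. y i) + \<Delta> (y n)))
     + (\<Delta> (\<Sum>i<n. y i) - (\<Sum>i<n. W i)) + (\<Delta> (y n) - W n)"
    by (simp add: algebra_simps)
  then show ?case by (simp only:) (intro addgen_add Dadd Suc.IH Suc.prems; simp)
qed
lemma coideal_gen:
  fixes s t :: "'a::ring_1 \<Rightarrow> 'h::ring_1" and \<epsilon> :: "'h \<Rightarrow> 'a"
    and \<Delta> \<delta> :: "'h \<Rightarrow> ('h \<times> 'h \<Rightarrow>\<^sub>0 int)"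
  assumes s_mult: "\<And>x y. s (x * y) = s x * s y" and s_add: "\<And>x y. s (x + y) = s x + s y"
    and s1: "s 1 = 1"
    and eps_add: "\<And>x y. \<epsilon> (x + y) = \<epsilon> x + \<epsilon> y"
    and eps_lin: "\<And>a b h. \<epsilon> (s a * t b * h) = a * \<epsilon> h * b"
    and counit: "fsum (\<lambda>(x, y). s (\<epsilon> x) * y) (\<Delta> b) = b"
    and dD: "\<delta> b - \<Delta> b \<in> addgen (tens2_rels s t UNIV UNIV)"
  shows "\<Delta> b - (frag_extend (\<lambda>(x, y). frag_of (x - t (\<epsilon> x), y)) (\<delta> b) + frag_of (1, b))
           \<in> addgen (tens2_rels s t UNIV UNIV)"
proof -
  define G where "G = addgen (tens2_rels s t UNIV UNIV)"
  define g where "g = (\<lambda>(x::'h, y::'h). s (\<epsilon> x) * y)"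
  define F1 where "F1 = (\<lambda>(x::'h, y::'h). frag_of (x - t (\<epsilon> x), y))"
  define F2 where "F2 = (\<lambda>z. frag_of (1::'h, g z))"
  have eps_t_mult: "\<epsilon> (t a * x) = \<epsilon> x * a" for a x
    using eps_lin[of 1 a x] by (simp add: s1)
  have fsum_rel: "fsum g r = 0" if r: "r \<in> tens2_rels s t UNIV UNIV" for r
    using r[unfolded tens2_rels_def]
    by (auto simp: fsum_diff fsum_of g_def eps_add s_add distrib_right distrib_left
          eps_t_mult s_mult mult.assoc)
  have fsum_G: "fsum g u = 0" if "u \<in> G" for u
    using that unfolding G_def
    by (induction rule: addgen.induct) (auto simp: fsum_zero fsum_rel fsum_diff)
  have gd: "fsum g (\<delta> b) = b"
  proof -
    have "fsum g (\<delta> b) - fsum g (\<Delta> b) = 0"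
      using fsum_G[of "\<delta> b - \<Delta> b"] dD by (simp add: G_def fsum_diff)
    then show ?thesis using counit by (simp add: g_def)
  qed
  have A: "frag_extend (\<lambda>z. (frag_of z - F1 z) - F2 z) (\<delta> b) \<in> G"
    unfolding G_def
  proof (rule frag_extend_addgen)
    fix z :: "'h \<times> 'h"
    obtain x y where z: "z = (x, y)" by (cases z)
    have "frag_of z - F1 z - F2 z =
       (frag_of ((x - t (\<epsilon> x)) + t (\<epsilon> x), y) - frag_of (x - t (\<epsilon> x), y) - frag_of (t (\<epsilon> x), y))
       + (frag_of (t (\<epsilon> x) * 1, y) - frag_of (1, s (\<epsilon> x) * y))"
      by (simp add: z F1_def F2_def g_def)
    also have "\<dots> \<in> G" unfolding G_def by (intro addgen_add rel_add1 rel_bal) auto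
    finally show "frag_of z - F1 z - F2 z \<in> addgen (tens2_rels s t UNIV UNIV)" unfolding G_def .
  qed
  have B: "frag_extend F2 u - frag_of (1, fsum g u) \<in> G" for u
    using subset_UNIV
  proof (induction u rule: frag_induction)
    case zero
    have "frag_of (1::'h, 0 + 0) - frag_of (1, 0) - frag_of (1, 0) \<in> G"
      unfolding G_def by (rule rel_add2) auto
    then show ?case by (simp add: fsum_zero)
  next
    case (one x)
    then show ?case by (simp add: fsum_of F2_def G_def addgen.zero)
  next
    case (diff a c)
    have "frag_extend F2 (a - c) - frag_of (1, fsum g (a - c)) =
       ((frag_extend F2 a - frag_of (1, fsum g a)) - (frag_extend F2 c - frag_of (1, fsum g c)))
       + (frag_of (1, (fsum g a - fsum g c) + fsum g c) - frag_of (1, fsum g a - fsum g c) - frag_of (1, fsum g c))"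
      by (simp add: frag_extend_diff fsum_diff algebra_simps)
    also have "\<dots> \<in> G"
      using addgen_add[OF addgen.diff[OF diff[unfolded G_def]]
          rel_add2[of 1 UNIV "fsum g a - fsum g c" UNIV "fsum g c" s t]]
      unfolding G_def by simp
    finally show ?case .
  qed
  have eq: "\<Delta> b - (frag_extend F1 (\<delta> b) + frag_of (1, b)) =
     - (\<delta> b - \<Delta> b) + frag_extend (\<lambda>z. (frag_of z - F1 z) - F2 z) (\<delta> b)
       + (frag_extend F2 (\<delta> b) - frag_of (1, fsum g (\<delta> b)))"
  proof -
    have "frag_extend (\<lambda>z. (frag_of z - F1 z) - F2 z) (\<delta> b) =
          frag_extend (\<lambda>z. frag_of z - F1 z) (\<delta> b) - frag_extend F2 (\<delta> b)"
      by (rule frag_extend_fun_diff)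
    also have "\<dots> = frag_extend frag_of (\<delta> b) - frag_extend F1 (\<delta> b) - frag_extend F2 (\<delta> b)"
      by (simp only: frag_extend_fun_diff)
    also have "\<dots> = \<delta> b - frag_extend F1 (\<delta> b) - frag_extend F2 (\<delta> b)"
      by (simp flip: frag_expansion)
    finally show ?thesis by (simp add: gd algebra_simps)
  qed
  have "\<Delta> b - (frag_extend F1 (\<delta> b) + frag_of (1, b)) \<in> G"
    unfolding eq using A[unfolded G_def] B[of "\<delta> b", unfolded G_def] dD unfolding G_def
    by (intro addgen_add addgen_uminus)
  then show ?thesis by (simp add: G_def F1_def)
qed

lemma sum_cat: "(\<Sum>i<n + m. f i) = (\<Sum>i<n. f i) + (\<Sum>i<(m::nat). f (n + i))"
  for f :: "nat \<Rightarrow> 'a::ring_1"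
  by (induction m) (simp_all add: add.assoc)

lemma left_genI: "(\<And>i. i < n \<Longrightarrow> b i \<in> X) \<Longrightarrow> x = (\<Sum>i<(n::nat). h i * b i) \<Longrightarrow> x \<in> left_gen X"
  unfolding left_gen_def by blast

lemma left_genE:
  assumes "x \<in> left_gen X"
  obtains n h b where "\<And>i. i < n \<Longrightarrow> b i \<in> X" "x = (\<Sum>i<(n::nat). h i * b i)"
  using assms unfolding left_gen_def by blast

lemma left_gen_zero: "0 \<in> left_gen X"
  by (rule left_genI[of 0]) auto

lemma left_gen_mult: "x \<in> left_gen X \<Longrightarrow> h * x \<in> left_gen X"
proof -
  assume "x \<in> left_gen X"
  then obtain n hh b where b: "\<And>i. i < n \<Longrightarrow> b i \<in> X" and x: "x = (\<Sum>i<(n::nat). hh i * b i)"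
    by (rule left_genE) blast
  show ?thesis
    by (rule left_genI[of n b X _ "\<lambda>i. h * hh i"]) (simp_all add: b x sum_distrib_left mult.assoc)
qed

lemma left_gen_addc: "x \<in> left_gen X \<Longrightarrow> y \<in> left_gen X \<Longrightarrow> x + c * y \<in> left_gen X"
proof -
  assume "x \<in> left_gen X" "y \<in> left_gen X"
  then obtain n hh b m hh' b' where b: "\<And>i. i < n \<Longrightarrow> b i \<in> X" and x: "x = (\<Sum>i<(n::nat). hh i * b i)"
    and b': "\<And>i. i < m \<Longrightarrow> b' i \<in> X" and y: "y = (\<Sum>i<(m::nat). hh' i * b' i)"
    by (elim left_genE) blast
  define H where "H = (\<lambda>i. if i < n then hh i else c * hh' (i - n))"
  define Bb where "Bb = (\<lambda>i. if i < n then b i else b' (i - n))"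
  have mem: "Bb i \<in> X" if "i < n + m" for i using b b' that by (auto simp: Bb_def)
  have "(\<Sum>i<n + m. H i * Bb i) = (\<Sum>i<n. H i * Bb i) + (\<Sum>i<m. H (n + i) * Bb (n + i))"
    by (rule sum_cat)
  moreover have "(\<Sum>i<n. H i * Bb i) = x"
    unfolding x by (rule sum.cong) (auto simp: H_def Bb_def)
  moreover have "(\<Sum>i<m. H (n + i) * Bb (n + i)) = c * y"
    unfolding y sum_distrib_left by (rule sum.cong) (auto simp: H_def Bb_def mult.assoc)
  ultimately show ?thesis by (intro left_genI[where h=H, OF mem]) auto
qed

lemma left_gen_ideal: "left_ideal (left_gen X)"
  unfolding left_ideal_def
  using left_gen_zero left_gen_mult left_gen_addc[where c=1] left_gen_addc[where c="-1"]
  by auto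
lemma tens2_eq_UNIV: "tens2_eq s t UNIV UNIV u v \<longleftrightarrow> u - v \<in> addgen (tens2_rels s t UNIV UNIV)"
  by (simp add: tens2_eq_def)

lemma left_gen_base: "x \<in> X \<Longrightarrow> x \<in> left_gen X"
  by (rule left_genI[of 1 "\<lambda>_. x" X x "\<lambda>_. 1"]) auto

lemma left_gen_mono: "X \<subseteq> Y \<Longrightarrow> left_gen X \<subseteq> left_gen Y"
proof
  fix x assume XY: "X \<subseteq> Y" and "x \<in> left_gen X"
  then obtain n h b where "\<And>i. i < n \<Longrightarrow> b i \<in> X" "x = (\<Sum>i<(n::nat). h i * b i)"
    by (elim left_genE) blast
  with XY show "x \<in> left_gen Y" by (intro left_genI[of n b Y x h]) auto
qed

lemma additive_sum:
  fixes f :: "'b::ab_group_add \<Rightarrow> 'c::ab_group_add" and n :: nat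
  assumes add: "\<And>x y. f (x + y) = f x + f y"
  shows "f (\<Sum>i<n. g i) = (\<Sum>i<n. f (g i))"
proof -
  have f0: "f 0 = 0" using add[of 0 0] by simp
  show ?thesis by (induction n) (simp_all add: f0 add)
qed

lemma keys_tmult_ideal:
  assumes I: "left_ideal I" and v: "Poly_Mapping.keys v \<subseteq> I \<times> UNIV \<union> UNIV \<times> I"
  shows "Poly_Mapping.keys (tmult w v) \<subseteq> I \<times> UNIV \<union> UNIV \<times> I"
proof
  fix k assume "k \<in> Poly_Mapping.keys (tmult w v)"
  then obtain z z' where k: "k = (fst z * fst z', snd z * snd z')" and z': "z' \<in> Poly_Mapping.keys v"
    using keys_tmult[of w v] by blast
  have "fst z' \<in> I \<or> snd z' \<in> I" using v z' by auto
  then show "k \<in> I \<times> UNIV \<union> UNIV \<times> I"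
    using I unfolding left_ideal_def k by auto
qed

theorem proposition2p6:
  fixes eA :: "'k::field \<Rightarrow> 'a::ring_1" and eH :: "'k \<Rightarrow> 'h::ring_1"
    and s t :: "'a \<Rightarrow> 'h" and \<Delta> :: "'h \<Rightarrow> ('h \<times> 'h \<Rightarrow>\<^sub>0 int)" and \<epsilon> :: "'h \<Rightarrow> 'a"
  assumes "left_bialgebroid eA eH s t \<Delta> \<epsilon>"
  shows "(\<forall>B. right_comodule_subring eH s t \<Delta> \<epsilon> B \<longrightarrow>
             left_ideal_two_sided_coideal s t \<Delta> \<epsilon> (left_gen (plus_part \<epsilon> B)))
       \<and> (\<forall>B B'. right_comodule_subring eH s t \<Delta> \<epsilon> B \<and> right_comodule_subring eH s t \<Delta> \<epsilon> B'
             \<and> B \<subseteq> B' \<longrightarrow> left_gen (plus_part \<epsilon> B) \<subseteq> left_gen (plus_part \<epsilon> B'))"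
proof (intro conjI allI impI)
  fix B B' assume "right_comodule_subring eH s t \<Delta> \<epsilon> B \<and> right_comodule_subring eH s t \<Delta> \<epsilon> B' \<and> B \<subseteq> B'"
  then have "plus_part \<epsilon> B \<subseteq> plus_part \<epsilon> B'" unfolding plus_part_def by auto
  then show "left_gen (plus_part \<epsilon> B) \<subseteq> left_gen (plus_part \<epsilon> B')" by (rule left_gen_mono)
next
  fix B assume rc: "right_comodule_subring eH s t \<Delta> \<epsilon> B"
  define G where "G = addgen (tens2_rels s t UNIV UNIV)"
  note A = assms[unfolded left_bialgebroid_def alg_map_def alg_map_op_def tens2_eq_UNIV]
  have s1: "s 1 = 1" using A by (elim conjE) assumption
  have s_add: "\<forall>x y. s (x + y) = s x + s y" using A by (elim conjE) assumption
  note s_add = s_add[rule_format]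
  have s_mult: "\<forall>x y. s (x * y) = s x * s y" using A by (elim conjE) assumption
  note s_mult = s_mult[rule_format]
  have t_add: "\<forall>x y. t (x + y) = t x + t y" using A by (elim conjE) assumption
  note t_add = t_add[rule_format]
  have Dadd: "\<forall>x y. \<Delta> (x + y) - (\<Delta> x + \<Delta> y) \<in> G" using A unfolding G_def by (elim conjE) assumption
  note Dadd = Dadd[rule_format]
  have eps_add: "\<forall>x y. \<epsilon> (x + y) = \<epsilon> x + \<epsilon> y" using A by (elim conjE) assumption
  note eps_add = eps_add[rule_format]
  have eps_lin: "\<forall>a b h. \<epsilon> (s a * t b * h) = a * \<epsilon> h * b" using A by (elim conjE) assumption
  note eps_lin = eps_lin[rule_format]
  have counit: "\<forall>h. fsum (\<lambda>(x, y). s (\<epsilon> x) * y) (\<Delta> h) = h" using A by (elim conjE) assumption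
  note counit = counit[rule_format]
  have tak: "\<forall>h a. tmap (\<lambda>(x, y). (x * t a, y)) (\<Delta> h) - tmap (\<lambda>(x, y). (x, y * s a)) (\<Delta> h) \<in> G"
    using A unfolding G_def by (elim conjE) assumption
  note tak = tak[rule_format]
  have Dmult: "\<forall>x y. \<Delta> (x * y) - tmult (\<Delta> x) (\<Delta> y) \<in> G" using A unfolding G_def by (elim conjE) assumption
  note Dmult = Dmult[rule_format]
  have eps_st: "\<forall>x y. \<epsilon> (x * s (\<epsilon> y)) = \<epsilon> (x * y) \<and> \<epsilon> (x * y) = \<epsilon> (x * t (\<epsilon> y))"
    using A by (elim conjE) assumption
  note eps_t = conjunct2[OF eps_st[rule_format]]
  have eps1: "\<epsilon> 1 = 1" using A by (elim conjE) assumption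
  have eps0: "\<epsilon> 0 = 0" using eps_add[of 0 0] by simp
  have t0: "t 0 = 0" using t_add[of 0 0] by simp
  have eps_diff: "\<epsilon> (x - y) = \<epsilon> x - \<epsilon> y" for x y
    using eps_add[of "x - y" y] by (simp add: algebra_simps)
  have eps_tc: "\<epsilon> (t c) = c" for c
    using eps_lin[of 1 c 1] eps1 by (simp add: s1)
  have ks: "k_subalgebra eH B" using rc unfolding right_comodule_subring_def by (elim conjE) assumption
  have rt: "range t \<subseteq> B" using rc unfolding right_comodule_subring_def by (elim conjE) assumption
  have Bops: "\<forall>x\<in>B. \<forall>y\<in>B. x + y \<in> B \<and> x - y \<in> B \<and> x * y \<in> B"
    using ks unfolding k_subalgebra_def by (elim conjE) assumption
  have Bdiff: "x - y \<in> B" if "x \<in> B" "y \<in> B" for x y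
    using Bops that by simp
  have "\<exists>\<delta>. (\<forall>b\<in>B. Poly_Mapping.keys (\<delta> b) \<subseteq> B \<times> UNIV) \<and> (\<forall>b\<in>B. tens2_eq s t UNIV UNIV (\<delta> b) (\<Delta> b))"
    using rc unfolding right_comodule_subring_def by (elim conjE exE) (intro exI conjI; assumption)
  then obtain \<delta> where d1: "\<forall>b\<in>B. Poly_Mapping.keys (\<delta> b) \<subseteq> B \<times> UNIV"
    and d2: "\<forall>b\<in>B. tens2_eq s t UNIV UNIV (\<delta> b) (\<Delta> b)" by (elim exE conjE)
  have dkeys: "Poly_Mapping.keys (\<delta> b) \<subseteq> B \<times> UNIV" if "b \<in> B" for b using d1 that by simp
  have dD: "\<delta> b - \<Delta> b \<in> G" if "b \<in> B" for b using d2 that by (simp add: tens2_eq_UNIV G_def)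
  define I where "I = left_gen (plus_part \<epsilon> B)"
  have I: "left_ideal I" unfolding I_def by (rule left_gen_ideal)
  define T where "T = I \<times> UNIV \<union> UNIV \<times> I"
  define V where "V = (\<lambda>b. frag_extend (\<lambda>(x, y). frag_of (x - t (\<epsilon> x), y)) (\<delta> b) + frag_of (1::'h, b))"
  have Vkeys: "Poly_Mapping.keys (V b) \<subseteq> T" if b: "b \<in> plus_part \<epsilon> B" for b
  proof -
    have bB: "b \<in> B" using b unfolding plus_part_def by simp
    have "Poly_Mapping.keys (frag_extend (\<lambda>(x, y). frag_of (x - t (\<epsilon> x), y)) (\<delta> b)) \<subseteq> I \<times> UNIV"
    proof
      fix k assume "k \<in> Poly_Mapping.keys (frag_extend (\<lambda>(x, y). frag_of (x - t (\<epsilon> x), y)) (\<delta> b))"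
      then have "k \<in> (\<Union>z \<in> Poly_Mapping.keys (\<delta> b). Poly_Mapping.keys ((\<lambda>(x, y). frag_of (x - t (\<epsilon> x), y)) z))"
        by (rule subsetD[OF keys_frag_extend])
      then obtain z where z: "z \<in> Poly_Mapping.keys (\<delta> b)"
        and k: "k \<in> Poly_Mapping.keys ((\<lambda>(x, y). frag_of (x - t (\<epsilon> x), y)) z)"
        by (rule UN_E)
      have fz: "fst z \<in> B" using z dkeys[OF bB] by (auto simp: mem_Times_iff)
      have tz: "t (\<epsilon> (fst z)) \<in> B" using rt by (rule subsetD) simp
      have "fst z - t (\<epsilon> (fst z)) \<in> plus_part \<epsilon> B"
        unfolding plus_part_def using Bdiff[OF fz tz] by (simp add: eps_diff eps_tc)
      then have "fst z - t (\<epsilon> (fst z)) \<in> I" unfolding I_def by (rule left_gen_base)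
      moreover have "k = (fst z - t (\<epsilon> (fst z)), snd z)" using k by (simp add: case_prod_unfold)
      ultimately show "k \<in> I \<times> UNIV" by simp
    qed
    moreover have "b \<in> I" unfolding I_def using b by (rule left_gen_base)
    moreover have "Poly_Mapping.keys (V b) \<subseteq> Poly_Mapping.keys (frag_extend (\<lambda>(x, y). frag_of (x - t (\<epsilon> x), y)) (\<delta> b)) \<union> {(1, b)}"
      unfolding V_def using keys_add[of "frag_extend (\<lambda>(x, y). frag_of (x - t (\<epsilon> x), y)) (\<delta> b)" "frag_of (1, b)"]
      by simp
    ultimately show ?thesis unfolding T_def by blast
  qed
  have VD: "\<Delta> b - V b \<in> G" if b: "b \<in> plus_part \<epsilon> B" for b
  proof -
    have bB: "b \<in> B" using b unfolding plus_part_def by auto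
    show ?thesis unfolding V_def G_def
      by (rule coideal_gen[where s=s and t=t and \<epsilon>=\<epsilon> and \<Delta>=\<Delta> and \<delta>=\<delta> and b=b, OF s_mult s_add s1 eps_add eps_lin counit dD[OF bB, unfolded G_def]])
  qed
  show "left_ideal_two_sided_coideal s t \<Delta> \<epsilon> (left_gen (plus_part \<epsilon> B))"
    unfolding left_ideal_two_sided_coideal_def I_def[symmetric]
  proof (intro conjI ballI)
    show "left_ideal I" by (rule I)
  next
    fix x assume "x \<in> I"
    then obtain n h b where b: "\<And>i. i < n \<Longrightarrow> b i \<in> plus_part \<epsilon> B" and x: "x = (\<Sum>i<(n::nat). h i * b i)"
      unfolding I_def by (elim left_genE) blast
    have "\<epsilon> (h i * b i) = 0" if "i < n" for i
    proof -
      have "\<epsilon> (b i) = 0" using b[OF that] unfolding plus_part_def by auto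
      then show ?thesis using eps_t[of "h i" "b i"] by (simp add: t0 eps0)
    qed
    then show "\<epsilon> x = 0" unfolding x additive_sum[of \<epsilon>, OF eps_add] by simp
  next
    fix x assume "x \<in> I"
    then obtain n h b where b: "\<And>i. i < n \<Longrightarrow> b i \<in> plus_part \<epsilon> B" and x: "x = (\<Sum>i<(n::nat). h i * b i)"
      unfolding I_def by (elim left_genE) blast
    define v where "v = (\<Sum>i<n. tmult (\<Delta> (h i)) (V (b i)))"
    have "Poly_Mapping.keys v \<subseteq> T"
    proof -
      have "Poly_Mapping.keys (tmult (\<Delta> (h i)) (V (b i))) \<subseteq> T" if "i < n" for i
        unfolding T_def by (rule keys_tmult_ideal[OF I Vkeys[OF b[OF that], unfolded T_def]])
      then show ?thesis unfolding v_def using keys_sum[of "\<lambda>i. tmult (\<Delta> (h i)) (V (b i))" "{..<n}"]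
        by blast
    qed
    moreover have "\<Delta> x - v \<in> G"
      unfolding x v_def G_def
    proof (rule Delta_sum[OF Dadd[unfolded G_def]])
      fix i assume i: "i < n"
      have "\<Delta> (h i * b i) - tmult (\<Delta> (h i)) (V (b i)) =
         (\<Delta> (h i * b i) - tmult (\<Delta> (h i)) (\<Delta> (b i))) + tmult (\<Delta> (h i)) (\<Delta> (b i) - V (b i))"
        by (simp add: tmult_diff_right)
      also have "\<dots> \<in> G" unfolding G_def
        by (rule addgen_add[OF Dmult[unfolded G_def] tmult_left_addgen[OF tak[unfolded G_def] VD[OF b[OF i], unfolded G_def]]])
      finally show "\<Delta> (h i * b i) - tmult (\<Delta> (h i)) (V (b i)) \<in> addgen (tens2_rels s t UNIV UNIV)"
        unfolding G_def .
    qed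
    ultimately show "\<exists>v. Poly_Mapping.keys v \<subseteq> I \<times> UNIV \<union> UNIV \<times> I \<and> tens2_eq s t UNIV UNIV (\<Delta> x) v"
      unfolding tens2_eq_UNIV T_def G_def by blast
  qed
qed

end
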